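(* Let $k\ge1$, $n\ge2$, $m=kn-1$, and let $\varphi\in C^\infty(\mathbb P_m\mathbb C)$ be $g$-admissible and $G_{n,k}$-invariant. Then for all real $0<x_i\le1$ ($1\le i\le m$), $$(\varphi-\psi)([1,x_1,\dots,x_m])\ge(\varphi-\psi)([1,\zeta_0^{[n-1]},\zeta_1^{[n]},\dots,\zeta_{k-1}^{[n]}]),$$ where $\zeta^{[d]}=(\zeta,\dots,\zeta)\in\mathbb C^d$, $\zeta_0=(x_1\cdots x_{n-1})^{1/(n-1)}$ and $\zeta_h=(x_{hn}\cdots x_{(h+1)n-1})^{1/n}$ for $1\le h\le k-1$.
   Context: Homogeneous coordinates on $\mathbb P_m\mathbb C$, $m=kn-1$, are written $[z_0,\dots,z_m]=[Z_0,\dots,Z_{k-1}]$ with blocks $Z_h=(z_{hn},\dots,z_{(h+1)n-1})$. The metric $g$ has components $g_{\lambda\bar\mu}=a_m\,\partial^2\ln(1+|z_1|^2+\cdots+|z_m|^2)/\partial z_\lambda\partial\bar z_\mu$ in the chart $\{z_0=1\}$, for a fixed $a_m>0$. $\varphi$ is $g$-admissible if $g_{\lambda\bar\mu}+\partial^2\varphi/\partial z_\lambda\partial\bar z_\mu$ is positive definite everywhere. $G_{n,k}$ is the automorphism group generated by swaps of two blocks $Z_i,Z_j$, multiplication of a single coordinate $z_p$ by $e^{i\theta}$, and transpositions of two coordinates in the same block. $\psi([z_0,\dots,z_m])=\ln\big((|z_0|\cdots|z_m|)^{2a_m/(m+1)}/(|z_0|^2+\cdots+|z_m|^2)^{a_m}\big)$,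 defined where all $z_p\ne0$. *)

theory Defs
  imports "HOL-Analysis.Analysis"
begin

(* Points of C^{m+1} are represented as  z :: nat => complex  (only indices 0..m matter). *)

definition proj_fun :: "nat \<Rightarrow> ((nat \<Rightarrow> complex) \<Rightarrow> real) \<Rightarrow> bool" where
  "proj_fun m \<phi> \<longleftrightarrow>
     (\<forall>z z'. (\<forall>i\<le>m. z i = z' i) \<longrightarrow> \<phi> z = \<phi> z') \<and>
     (\<forall>z c. c \<noteq> 0 \<longrightarrow> \<phi> (\<lambda>i. c * z i) = \<phi> z)"

definition chart_idx :: "nat \<Rightarrow> nat \<Rightarrow> nat set" where
  "chart_idx m j = {0..m} - {j}"

definition chart :: "nat \<Rightarrow> nat \<Rightarrow> (nat \<Rightarrow> complex) \<Rightarrow> (nat \<Rightarrow> complex)" where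
  "chart m j w = (\<lambda>i. if i = j then 1 else if i \<le> m then w i else 0)"

definition coord_space :: "nat set \<Rightarrow> (nat \<Rightarrow> complex) set" where
  "coord_space I = {w. \<forall>i. i \<notin> I \<longrightarrow> w i = 0}"

definition dir_line :: "nat \<Rightarrow> bool \<Rightarrow> (nat \<Rightarrow> complex) \<Rightarrow> real \<Rightarrow> (nat \<Rightarrow> complex)" where
  "dir_line i b w t = w(i := w i + (if b then \<i> else 1) * complex_of_real t)"

definition dpart :: "nat \<Rightarrow> bool \<Rightarrow> ((nat \<Rightarrow> complex) \<Rightarrow> real) \<Rightarrow> (nat \<Rightarrow> complex) \<Rightarrow> real" where
  "dpart i b f w = deriv (\<lambda>t. f (dir_line i b w t)) 0"

fun iter_dpart :: "(nat \<times> bool) list \<Rightarrow> ((nat \<Rightarrow> complex) \<Rightarrow> real) \<Rightarrow> (nat \<Rightarrow> complex) \<Rightarrow> real" where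
  "iter_dpart [] f = f"
| "iter_dpart ((i,b) # ds) f = dpart i b (iter_dpart ds f)"

definition smooth_coords :: "nat set \<Rightarrow> ((nat \<Rightarrow> complex) \<Rightarrow> real) \<Rightarrow> bool" where
  "smooth_coords I f \<longleftrightarrow>
     (\<forall>ds. set (map fst ds) \<subseteq> I \<longrightarrow>
        continuous_on (coord_space I) (iter_dpart ds f) \<and>
        (\<forall>i\<in>I. \<forall>b. \<forall>w\<in>coord_space I.
            (\<lambda>t. iter_dpart ds f (dir_line i b w t)) differentiable (at 0)))"

definition smooth_Pm :: "nat \<Rightarrow> ((nat \<Rightarrow> complex) \<Rightarrow> real) \<Rightarrow> bool" where
  "smooth_Pm m \<phi> \<longleftrightarrow> (\<forall>j\<le>m. smooth_coords (chart_idx m j) (\<lambda>w. \<phi> (chart m j w)))"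

(* complex Hessian  d^2 f / dz_l d(conj z_u) = 1/4 (dx_l dx_u + dy_l dy_u + i (dx_l dy_u - dy_l dx_u)) *)
definition cplx_hess :: "((nat \<Rightarrow> complex) \<Rightarrow> real) \<Rightarrow> (nat \<Rightarrow> complex) \<Rightarrow> nat \<Rightarrow> nat \<Rightarrow> complex" where
  "cplx_hess f w l u =
     (complex_of_real (iter_dpart [(l,False),(u,False)] f w + iter_dpart [(l,True),(u,True)] f w)
      + \<i> * complex_of_real (iter_dpart [(l,False),(u,True)] f w - iter_dpart [(l,True),(u,False)] f w)) / 4"

definition pos_def_herm :: "nat set \<Rightarrow> (nat \<Rightarrow> nat \<Rightarrow> complex) \<Rightarrow> bool" where
  "pos_def_herm I M \<longleftrightarrow>
     (\<forall>l\<in>I. \<forall>u\<in>I. M u l = cnj (M l u)) \<and>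
     (\<forall>v. (\<exists>i\<in>I. v i \<noteq> 0) \<longrightarrow> 0 < Re (\<Sum>l\<in>I. \<Sum>u\<in>I. M l u * v l * cnj (v u)))"

(* Kaehler potential of g in chart j: a * ln (1 + sum |w_i|^2) *)
definition fs_pot :: "nat set \<Rightarrow> (nat \<Rightarrow> complex) \<Rightarrow> real" where
  "fs_pot I w = ln (1 + (\<Sum>i\<in>I. (cmod (w i))\<^sup>2))"

definition g_admissible :: "real \<Rightarrow> nat \<Rightarrow> ((nat \<Rightarrow> complex) \<Rightarrow> real) \<Rightarrow> bool" where
  "g_admissible a m \<phi> \<longleftrightarrow>
     (\<forall>j\<le>m. \<forall>w\<in>coord_space (chart_idx m j).
        pos_def_herm (chart_idx m j)
          (\<lambda>l u. complex_of_real a * cplx_hess (fs_pot (chart_idx m j)) w l u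
                 + cplx_hess (\<lambda>w'. \<phi> (chart m j w')) w l u))"

(* generators of G_{n,k} acting on homogeneous coordinates *)
definition block_swap :: "nat \<Rightarrow> nat \<Rightarrow> nat \<Rightarrow> nat \<Rightarrow> nat" where
  "block_swap n i j p =
     (if p div n = i then j * n + p mod n else if p div n = j then i * n + p mod n else p)"

definition G_invariant :: "nat \<Rightarrow> nat \<Rightarrow> ((nat \<Rightarrow> complex) \<Rightarrow> real) \<Rightarrow> bool" where
  "G_invariant n k \<phi> \<longleftrightarrow>
     (\<forall>i<k. \<forall>j<k. \<forall>z. \<phi> (z \<circ> block_swap n i j) = \<phi> z) \<and>
     (\<forall>p<k*n. \<forall>\<theta>::real. \<forall>z. \<phi> (z(p := cis \<theta> * z p)) = \<phi> z) \<and>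
     (\<forall>p<k*n. \<forall>q<k*n. p div n = q div n \<longrightarrow>
        (\<forall>z. \<phi> (z \<circ> Fun.swap p q id) = \<phi> z))"

definition psi :: "real \<Rightarrow> nat \<Rightarrow> (nat \<Rightarrow> complex) \<Rightarrow> real" where
  "psi a m z = ln (((\<Prod>p\<le>m. cmod (z p)) powr (2 * a / real (m + 1)))
                   / ((\<Sum>p\<le>m. (cmod (z p))\<^sup>2) powr a))"

end

theory Submission
  imports Defs
begin

definition cur :: "nat set \<Rightarrow> (nat \<Rightarrow> complex) \<Rightarrow> (nat \<Rightarrow> real \<Rightarrow> real) \<Rightarrow> real \<Rightarrow> (nat \<Rightarrow> complex)" where
  "cur J q \<rho> s = (\<lambda>i. if i \<in> J then complex_of_real (\<rho> i s) else q i)"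

lemma coord_space_upd: "p \<in> coord_space I \<Longrightarrow> l \<in> I \<Longrightarrow> p(l := c) \<in> coord_space I"
  by (auto simp: coord_space_def)

lemma cur_in: "q \<in> coord_space I \<Longrightarrow> J \<subseteq> I \<Longrightarrow> cur J q \<rho> s \<in> coord_space I"
  by (auto simp: coord_space_def cur_def)

lemma cur_cont:
  assumes "\<And>l. continuous_on UNIV (\<rho> l)"
  shows "continuous_on UNIV (\<lambda>(x::real,y). cur J (q(j := complex_of_real x)) \<rho> y)"
proof (rule continuous_on_coordinatewise_then_product)
  fix i
  show "continuous_on UNIV (\<lambda>xy. (case xy of (x, y) \<Rightarrow> cur J (q(j := complex_of_real x)) \<rho> y) i)"
  proof (cases "i \<in> J")
    case True
    have "continuous_on UNIV (\<lambda>xy::real\<times>real. complex_of_real (\<rho> i (snd xy)))"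
      by (intro continuous_intros continuous_on_compose2[OF assms[of i]]) auto
    then show ?thesis using True by (simp add: cur_def case_prod_beta)
  next
    case False
    have "continuous_on UNIV (\<lambda>xy::real\<times>real. complex_of_real (fst xy))"
      by (intro continuous_intros)
    then show ?thesis using False by (cases "i = j") (auto simp: cur_def case_prod_beta)
  qed
qed

lemma chain_curve:
  fixes g :: "(nat \<Rightarrow> complex) \<Rightarrow> real" and D :: "nat \<Rightarrow> (nat \<Rightarrow> complex) \<Rightarrow> real"
  assumes "finite J" "J \<subseteq> I"
  and D: "\<And>l p. l \<in> I \<Longrightarrow> p \<in> coord_space I \<Longrightarrow>
           ((\<lambda>t. g (p(l := p l + complex_of_real t))) has_real_derivative D l p) (at 0)"
  and C: "\<And>l. l \<in> I \<Longrightarrow> continuous_on (coord_space I) (D l)"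
  and R: "\<And>l s. (\<rho> l has_real_derivative \<rho>' l s) (at s)"
  and RC: "\<And>l. continuous_on UNIV (\<rho>' l)"
  and q: "q \<in> coord_space I"
  shows "((\<lambda>s. g (cur J q \<rho> s)) has_real_derivative (\<Sum>l\<in>J. D l (cur J q \<rho> s) * \<rho>' l s)) (at s)"
  using assms(1,2) q
proof (induction J arbitrary: q s rule: finite_induct)
  case empty
  then show ?case by (simp add: cur_def)
next
  case (insert j J)
  have jI: "j \<in> I" and JI: "J \<subseteq> I" using insert by auto
  have rc: "continuous_on UNIV (\<rho> l)" for l
    using R by (meson DERIV_continuous continuous_at_imp_continuous_on)
  define F where "F x y = g (cur J (q(j := complex_of_real x)) \<rho> y)" for x y
  define c where "c x y = (\<Sum>l\<in>J. D l (cur J (q(j := complex_of_real x)) \<rho> y) * \<rho>' l y)" for x y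
  define x0 where "x0 = \<rho> j s"
  define Dj where "Dj = D j (cur J (q(j := complex_of_real x0)) \<rho> s)"
  have qx: "q(j := complex_of_real x) \<in> coord_space I" for x
    using insert.prems jI by (simp add: coord_space_upd)
  have fy: "((\<lambda>y. F x y) has_derivative blinfun_apply (blinfun_mult_right (c x y))) (at y)" for x y
    using insert.IH[OF JI qx[of x], of y] unfolding F_def c_def has_field_derivative_def
    by (simp add: blinfun_mult_right.rep_eq)
  have fx: "((\<lambda>x. F x s) has_derivative (\<lambda>h. h * Dj)) (at x0)"
  proof -
    let ?p = "cur J (q(j := complex_of_real x0)) \<rho> s"
    have p: "?p \<in> coord_space I" using cur_in[OF qx JI] .
    have eq: "(\<lambda>t. g (?p(j := ?p j + complex_of_real t))) = (\<lambda>t. F (t + x0) s)"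
      using insert.hyps(2) unfolding F_def by (intro ext arg_cong[where f=g]) (auto simp: cur_def add.commute)
    have "((\<lambda>t. F (t + x0) s) has_real_derivative Dj) (at 0)"
      using D[OF jI p] unfolding eq Dj_def .
    then have "((\<lambda>x. F x s) has_real_derivative Dj) (at x0)"
      using DERIV_shift[of "\<lambda>x. F x s" Dj 0 x0] by simp
    then show ?thesis unfolding has_field_derivative_def by (simp add: mult.commute[of _ Dj])
  qed
  have ccont: "continuous_on UNIV (\<lambda>(x, y). c x y)"
  proof -
    have "continuous_on UNIV (\<lambda>xy::real\<times>real. D l (cur J (q(j := complex_of_real (fst xy))) \<rho> (snd xy)))"
      if "l \<in> J" for l
    proof (rule continuous_on_compose2[OF C])
      show "l \<in> I" using that JI by auto
      show "continuous_on UNIV (\<lambda>xy::real\<times>real. cur J (q(j := complex_of_real (fst xy))) \<rho> (snd xy))"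
        using cur_cont[of \<rho> J q j, OF rc] by (simp add: case_prod_beta)
      show "(\<lambda>xy::real\<times>real. cur J (q(j := complex_of_real (fst xy))) \<rho> (snd xy)) ` UNIV \<subseteq> coord_space I"
        using cur_in[OF qx JI] by auto
    qed
    moreover have "continuous_on UNIV (\<lambda>xy::real\<times>real. \<rho>' l (snd xy))" for l
      by (intro continuous_on_compose2[OF RC[of l]] continuous_intros) auto
    ultimately show ?thesis unfolding c_def case_prod_beta
      by (intro continuous_intros) auto
  qed
  have fyc: "continuous (at (x0, s) within UNIV \<times> UNIV) (\<lambda>(x, y). blinfun_mult_right (c x y))"
  proof -
    have "continuous (at (x0, s)) (\<lambda>(x, y). c x y)"
      using ccont by (simp add: continuous_on_eq_continuous_at)
    then have "continuous (at (x0, s)) (\<lambda>xy. blinfun_mult_right ((\<lambda>(x, y). c x y) xy))"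
      by (intro bounded_linear.continuous[OF bounded_linear_blinfun_mult_right])
    then show ?thesis by (simp add: split_beta')
  qed
  have part: "((\<lambda>(x, y). F x y) has_derivative (\<lambda>(tx, ty). tx * Dj + blinfun_apply (blinfun_mult_right (c x0 s)) ty)) (at (x0, s))"
    using has_derivative_partialsI[OF fx fy fyc] by auto
  have pair: "((\<lambda>s. (\<rho> j s, s)) has_derivative (\<lambda>h. (\<rho>' j s * h, h))) (at s)"
    using R[of j s] unfolding has_field_derivative_def
    by (auto intro!: derivative_eq_intros)
  have comp0: "((\<lambda>s. F (\<rho> j s) s) has_derivative (\<lambda>h. \<rho>' j s * h * Dj + c x0 s * h)) (at s)"
    using diff_chain_at[OF pair part[unfolded x0_def]] unfolding x0_def
    by (simp add: o_def blinfun_mult_right.rep_eq)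
  have feq: "(\<lambda>h. \<rho>' j s * h * Dj + c x0 s * h) = (*) (Dj * \<rho>' j s + c x0 s)"
    by (auto simp: fun_eq_iff algebra_simps)
  have comp: "((\<lambda>s. F (\<rho> j s) s) has_real_derivative (Dj * \<rho>' j s + c x0 s)) (at s)"
    using comp0 unfolding feq has_field_derivative_def .
  have eqg: "cur (insert j J) q \<rho> s' = cur J (q(j := complex_of_real (\<rho> j s'))) \<rho> s'" for s'
    using insert.hyps(2) by (auto simp: cur_def fun_eq_iff)
  show ?case
    unfolding eqg sum.insert[OF insert.hyps]
    using comp unfolding F_def c_def Dj_def x0_def
    by (simp add: algebra_simps)
qed

lemma smooth_D:
  assumes "smooth_coords I f" "set (map fst ds) \<subseteq> I" "i \<in> I" "w \<in> coord_space I"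
  shows "((\<lambda>t. iter_dpart ds f (dir_line i b w t)) has_real_derivative dpart i b (iter_dpart ds f) w) (at 0)"
proof -
  have "(\<lambda>t. iter_dpart ds f (dir_line i b w t)) differentiable (at 0)"
    using assms unfolding smooth_coords_def by blast
  then show ?thesis unfolding dpart_def using DERIV_deriv_iff_real_differentiable by blast
qed

lemma smooth_C:
  assumes "smooth_coords I f" "set (map fst ds) \<subseteq> I"
  shows "continuous_on (coord_space I) (iter_dpart ds f)"
  using assms unfolding smooth_coords_def by blast

lemma cis_exists: "cmod z = cmod z' \<Longrightarrow> \<exists>\<theta>. z' = cis \<theta> * z"
proof (cases "z = 0")
  case True
  assume "cmod z = cmod z'"
  then show ?thesis using True by (intro exI[of _ 0]) auto
next
  case False
  assume h: "cmod z = cmod z'"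
  have "cis (Arg z' - Arg z) * z = cis (Arg z' - Arg z) * rcis (cmod z) (Arg z)"
    by (simp add: rcis_cmod_Arg)
  also have "\<dots> = rcis (cmod z') (Arg z')"
    by (simp add: rcis_def h cis_mult[symmetric] diff_add_cancel flip: mult.assoc)
       (simp add: mult.commute mult.left_commute cis_mult)
  also have "\<dots> = z'" by (simp add: rcis_cmod_Arg)
  finally show ?thesis by metis
qed

lemma dir_line_re: "dir_line l False p t = p(l := p l + complex_of_real t)"
  by (simp add: dir_line_def)

lemma Im_deriv_zero:
  assumes tor: "\<And>z \<zeta> \<zeta>'. cmod \<zeta> = cmod \<zeta>' \<Longrightarrow> f (z(u := \<zeta>)) = f (z(u := \<zeta>'))"
    and sm: "smooth_coords I f" and u: "u \<in> I" and p: "p \<in> coord_space I" and im: "Im (p u) = 0"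
  shows "dpart u True f p = 0"
proof -
  let ?e = "\<lambda>t. f (dir_line u True p t)"
  have d: "(?e has_real_derivative dpart u True f p) (at 0)"
    using smooth_D[OF sm, of "[]" u p True] u p by simp
  have ev: "?e (-t) = ?e t" for t
    unfolding dir_line_def using im
    by (intro tor) (simp add: cmod_def)
  have "((\<lambda>t. ?e (-t)) has_real_derivative dpart u True f p * (-1)) (at 0)"
  proof -
    have d': "(?e has_real_derivative dpart u True f p) (at (-0))" using d by simp
    have m: "((\<lambda>t::real. -t) has_real_derivative -1) (at 0)" by (auto intro!: derivative_eq_intros)
    show ?thesis using DERIV_chain2[OF d' m] .
  qed
  then have "(?e has_real_derivative - dpart u True f p) (at 0)" using ev by simp
  with d have "dpart u True f p = - dpart u True f p" using DERIV_unique by blast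
  then show ?thesis by simp
qed

lemma TT_offdiag:
  assumes tor: "\<And>z \<zeta> \<zeta>'. cmod \<zeta> = cmod \<zeta>' \<Longrightarrow> f (z(u := \<zeta>)) = f (z(u := \<zeta>'))"
    and sm: "smooth_coords I f" and u: "u \<in> I" and l: "l \<in> I" and lu: "l \<noteq> u"
    and p: "p \<in> coord_space I" and im: "Im (p u) = 0"
  shows "iter_dpart [(l,True),(u,True)] f p = 0"
proof -
  have "(\<lambda>t. dpart u True f (dir_line l True p t)) = (\<lambda>t. 0)"
  proof
    fix t
    show "dpart u True f (dir_line l True p t) = 0"
      using Im_deriv_zero[OF tor sm u] p l lu im
      by (simp add: dir_line_def coord_space_upd)
  qed
  then show ?thesis by (simp add: dpart_def)
qed

lemma TT_diag:
  assumes tor: "\<And>z \<zeta> \<zeta>'. cmod \<zeta> = cmod \<zeta>' \<Longrightarrow> f (z(l := \<zeta>)) = f (z(l := \<zeta>'))"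
    and sm: "smooth_coords I f" and l: "l \<in> I"
    and p: "p \<in> coord_space I" and px: "p l = complex_of_real x" and x: "x > 0"
  shows "iter_dpart [(l,True),(l,True)] f p = dpart l False f p / x"
proof -
  define E where "E r = f (p(l := complex_of_real r))" for r
  define D1 where "D1 r = dpart l False f (p(l := complex_of_real r))" for r
  define \<rho> where "\<rho> t = sqrt (x\<^sup>2 + t\<^sup>2)" for t
  have \<rho>pos: "\<rho> t > 0" for t using x by (simp add: \<rho>_def add_pos_nonneg)
  have hE: "(E has_real_derivative D1 r) (at r)" for r
  proof -
    have "((\<lambda>t. f (dir_line l False (p(l := complex_of_real r)) t)) has_real_derivative D1 r) (at 0)"
      using smooth_D[OF sm, of "[]" l "p(l := complex_of_real r)" False] l p
      by (simp add: coord_space_upd D1_def)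
    moreover have "(\<lambda>t. f (dir_line l False (p(l := complex_of_real r)) t)) = (\<lambda>t. E (t + r))"
      by (simp add: dir_line_def E_def add.commute)
    ultimately have "((\<lambda>t. E (t + r)) has_real_derivative D1 r) (at 0)" by simp
    then show ?thesis using DERIV_shift[of E "D1 r" 0 r] by simp
  qed
  obtain D2 where hD1: "(D1 has_real_derivative D2) (at x)"
  proof -
    have "((\<lambda>t. dpart l False f (dir_line l False p t)) has_real_derivative
            dpart l False (dpart l False f) p) (at 0)"
      using smooth_D[OF sm, of "[(l,False)]" l p False] l p by simp
    moreover have "(\<lambda>t. dpart l False f (dir_line l False p t)) = (\<lambda>t. D1 (t + x))"
      by (simp add: dir_line_def D1_def px add.commute)
    ultimately have "((\<lambda>t. D1 (t + x)) has_real_derivative dpart l False (dpart l False f) p) (at 0)" by simp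
    then show ?thesis using DERIV_shift[of D1 _ 0 x] that by auto
  qed
  have hrho: "(\<rho> has_real_derivative t / \<rho> t) (at t)" for t
  proof -
    have a: "((\<lambda>t. x\<^sup>2 + t\<^sup>2) has_real_derivative 2 * t) (at t)"
      by (auto intro!: derivative_eq_intros)
    have b: "(sqrt has_real_derivative inverse (sqrt (x\<^sup>2 + t\<^sup>2)) / 2) (at (x\<^sup>2 + t\<^sup>2))"
      using \<rho>pos[of t] unfolding \<rho>_def by (intro DERIV_real_sqrt) auto
    have "((\<lambda>t. sqrt (x\<^sup>2 + t\<^sup>2)) has_real_derivative inverse (sqrt (x\<^sup>2 + t\<^sup>2)) / 2 * (2 * t)) (at t)"
      using DERIV_chain2[OF b a] .
    then show ?thesis unfolding \<rho>_def by (simp add: field_simps)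
  qed
  have g1: "dpart l True f (dir_line l True p t) = D1 (\<rho> t) * (t / \<rho> t)" for t
  proof -
    have eq: "(\<lambda>s. f (dir_line l True (dir_line l True p t) s)) = (\<lambda>s. E (\<rho> (t + s)))"
    proof
      fix s
      have "cmod (complex_of_real x + \<i> * complex_of_real t + \<i> * complex_of_real s)
            = cmod (complex_of_real (\<rho> (t + s)))"
        using \<rho>pos[of "t+s"] by (simp add: \<rho>_def cmod_def algebra_simps)
      then show "f (dir_line l True (dir_line l True p t) s) = E (\<rho> (t + s))"
        unfolding E_def dir_line_def using px by (simp add: tor)
    qed
    have "((\<lambda>s. E (\<rho> (t + s))) has_real_derivative D1 (\<rho> (t + 0)) * ((t + 0) / \<rho> (t + 0))) (at 0)"
    proof (rule DERIV_chain2[OF hE])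
      show "((\<lambda>s. \<rho> (t + s)) has_real_derivative (t + 0) / \<rho> (t + 0)) (at 0)"
        using DERIV_shift[of \<rho> "(t + 0) / \<rho> (t + 0)" 0 t] hrho[of "t + 0"] by (simp add: add.commute)
    qed
    then show ?thesis unfolding dpart_def eq by (simp add: DERIV_imp_deriv)
  qed
  have \<rho>0: "\<rho> 0 = x" using x by (simp add: \<rho>_def)
  have "((\<lambda>t. D1 (\<rho> t) * (t / \<rho> t)) has_real_derivative
          (D2 * (0 / \<rho> 0)) * (0 / \<rho> 0) + ((1 * \<rho> 0 - 0 * (0 / \<rho> 0)) / (\<rho> 0 * \<rho> 0)) * D1 (\<rho> 0)) (at 0)"
  proof (rule DERIV_mult)
    show "((\<lambda>t. D1 (\<rho> t)) has_real_derivative D2 * (0 / \<rho> 0)) (at 0)"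
    proof -
      have h1: "(D1 has_real_derivative D2) (at (\<rho> 0))" using hD1 \<rho>0 by simp
      show ?thesis using DERIV_chain2[OF h1 hrho[of 0]] .
    qed
    show "((\<lambda>t. t / \<rho> t) has_real_derivative (1 * \<rho> 0 - 0 * (0 / \<rho> 0)) / (\<rho> 0 * \<rho> 0)) (at 0)"
      by (rule DERIV_divide[OF DERIV_ident hrho]) (use \<rho>pos[of 0] in auto)
  qed
  then have "((\<lambda>t. dpart l True f (dir_line l True p t)) has_real_derivative D1 x / x) (at 0)"
    unfolding g1 using \<rho>0 x by simp
  moreover have "D1 x = dpart l False f p" unfolding D1_def using px[symmetric] by simp
  ultimately show ?thesis by (simp add: dpart_def DERIV_imp_deriv)
qed

definition Sq :: "nat set \<Rightarrow> (nat \<Rightarrow> complex) \<Rightarrow> real" where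
  "Sq I p = (\<Sum>i\<in>I. (cmod (p i))\<^sup>2)"

definition pr :: "bool \<Rightarrow> complex \<Rightarrow> real" where
  "pr b z = (if b then Im z else Re z)"

lemma Sq_nonneg: "Sq I p \<ge> 0" unfolding Sq_def by (simp add: sum_nonneg)

lemma cmod_dir: "(cmod (z + (if b then \<i> else 1) * complex_of_real t))\<^sup>2 = (cmod z)\<^sup>2 + 2 * t * pr b z + t\<^sup>2"
  by (cases b) (simp_all add: cmod_power2 pr_def, simp_all add: power2_eq_square algebra_simps)

lemma Sq_dir:
  assumes "finite I" "l \<in> I"
  shows "Sq I (dir_line l b p t) = Sq I p + 2 * t * pr b (p l) + t\<^sup>2"
proof -
  have "Sq I (dir_line l b p t) = (cmod (p l + (if b then \<i> else 1) * complex_of_real t))\<^sup>2 + (\<Sum>i\<in>I-{l}. (cmod (p i))\<^sup>2)"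
    unfolding Sq_def dir_line_def using assms by (simp add: sum.remove)
  also have "\<dots> = Sq I p + 2 * t * pr b (p l) + t\<^sup>2"
    unfolding cmod_dir Sq_def using assms by (simp add: sum.remove)
  finally show ?thesis .
qed

lemma fs_d1:
  assumes "finite I" "u \<in> I"
  shows "dpart u b (fs_pot I) p = 2 * pr b (p u) / (1 + Sq I p)"
proof -
  have eq: "(\<lambda>t. fs_pot I (dir_line u b p t)) = (\<lambda>t. ln (1 + Sq I p + 2 * t * pr b (p u) + t\<^sup>2))"
    using Sq_dir[OF assms] unfolding fs_pot_def Sq_def[symmetric] by (simp add: add.assoc)
  have pos: "0 < 1 + Sq I p" using Sq_nonneg[of I p] by linarith
  have "((\<lambda>t. ln (1 + Sq I p + 2 * t * pr b (p u) + t\<^sup>2)) has_real_derivative 2 * pr b (p u) / (1 + Sq I p)) (at 0)"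
    using pos by (auto intro!: derivative_eq_intros simp: field_simps)
  then show ?thesis unfolding dpart_def eq by (rule DERIV_imp_deriv)
qed

lemma fs_d2:
  assumes "finite I" "u \<in> I" "l \<in> I"
  shows "iter_dpart [(l,b),(u,b)] (fs_pot I) p =
     (2 * (if l = u then 1 else 0) * (1 + Sq I p) - 4 * pr b (p u) * pr b (p l)) / (1 + Sq I p)\<^sup>2"
proof -
  have pos: "0 < 1 + Sq I p" using Sq_nonneg[of I p] by linarith
  have prd: "pr b (dir_line l b p t u) = pr b (p u) + (if l = u then t else 0)" for t
    by (cases b) (auto simp: pr_def dir_line_def)
  have eq: "(\<lambda>t. dpart u b (fs_pot I) (dir_line l b p t)) =
       (\<lambda>t. 2 * (pr b (p u) + (if l = u then t else 0)) / (1 + Sq I p + 2 * t * pr b (p l) + t\<^sup>2))"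
    using fs_d1[OF assms(1,2)] Sq_dir[OF assms(1,3)] prd by (simp add: add.assoc)
  have "((\<lambda>t. 2 * (pr b (p u) + (if l = u then t else 0)) / (1 + Sq I p + 2 * t * pr b (p l) + t\<^sup>2))
        has_real_derivative
     (2 * (if l = u then 1 else 0) * (1 + Sq I p) - 4 * pr b (p u) * pr b (p l)) / (1 + Sq I p)\<^sup>2) (at 0)"
  proof (cases "l = u")
    case True
    then show ?thesis using pos
      by (auto intro!: derivative_eq_intros simp: field_simps power2_eq_square)
  next
    case False
    then show ?thesis using pos
      by (auto intro!: derivative_eq_intros simp: field_simps power2_eq_square)
  qed
  then show ?thesis unfolding iter_dpart.simps dpart_def[of l b "dpart u b (fs_pot I)"] eq by (rule DERIV_imp_deriv)
qed

lemma sum_delta_sq: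
  fixes X c :: "nat \<Rightarrow> real"
  assumes "finite I"
  shows "(\<Sum>l\<in>I. \<Sum>u\<in>I. (if l = u then X l else 0) * c l * c u) = (\<Sum>l\<in>I. X l * (c l)\<^sup>2)"
proof -
  have "(\<Sum>u\<in>I. (if l = u then X l else 0) * c l * c u) = (if l \<in> I then X l * (c l)\<^sup>2 else 0)" for l
    using assms by (simp add: if_distrib[of "\<lambda>x. x * _"] power2_eq_square sum.delta cong: if_cong)
  then show ?thesis by simp
qed

lemma sum_prod_sq:
  fixes r c :: "nat \<Rightarrow> real"
  shows "(\<Sum>l\<in>I. \<Sum>u\<in>I. r u * r l * c l * c u) = (\<Sum>l\<in>I. r l * c l)\<^sup>2"
  by (simp add: power2_eq_square sum_product algebra_simps)

lemma form_identity:
  fixes f :: "(nat \<Rightarrow> complex) \<Rightarrow> real" and r c :: "nat \<Rightarrow> real"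
  assumes fin: "finite I" and sm: "smooth_coords I f"
    and tor: "\<And>u z \<zeta> \<zeta>'. u \<in> I \<Longrightarrow> cmod \<zeta> = cmod \<zeta>' \<Longrightarrow> f (z(u := \<zeta>)) = f (z(u := \<zeta>'))"
    and w: "w \<in> coord_space I" and wr: "\<And>l. l \<in> I \<Longrightarrow> w l = complex_of_real (r l)"
    and rpos: "\<And>l. l \<in> I \<Longrightarrow> r l > 0"
  shows "4 * Re (\<Sum>l\<in>I. \<Sum>u\<in>I. (complex_of_real a * cplx_hess (fs_pot I) w l u + cplx_hess f w l u)
              * complex_of_real (c l) * cnj (complex_of_real (c u)))
     = (\<Sum>l\<in>I. \<Sum>u\<in>I. iter_dpart [(l,False),(u,False)] f w * c l * c u)
       + (\<Sum>l\<in>I. dpart l False f w / r l * (c l)\<^sup>2)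
       + a * (4 * (1 + Sq I w) * (\<Sum>l\<in>I. (c l)\<^sup>2) - 4 * (\<Sum>l\<in>I. r l * c l)\<^sup>2) / (1 + Sq I w)\<^sup>2"
proof -
  define T where "T = 1 + Sq I w"
  have Tpos: "T > 0" using Sq_nonneg[of I w] by (simp add: T_def)
  have ReH: "Re (cplx_hess g w l u) = (iter_dpart [(l,False),(u,False)] g w + iter_dpart [(l,True),(u,True)] g w) / 4" for g l u
    by (simp add: cplx_hess_def)
  have TTf: "iter_dpart [(l,True),(u,True)] f w = (if l = u then dpart l False f w / r l else 0)"
    if "l \<in> I" "u \<in> I" for l u
  proof (cases "l = u")
    case True
    then show ?thesis using TT_diag[OF tor sm, of l w "r l"] that w wr rpos by simp
  next
    case False
    then show ?thesis using TT_offdiag[OF tor sm, of u l w] that w wr by simp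
  qed
  have FFs: "iter_dpart [(l,False),(u,False)] (fs_pot I) w = (2 * (if l = u then 1 else 0) * T - 4 * r u * r l) / T\<^sup>2"
    if "l \<in> I" "u \<in> I" for l u
    using fs_d2[OF fin that(2,1), of False w] that wr unfolding T_def by (simp add: pr_def)
  have TTs: "iter_dpart [(l,True),(u,True)] (fs_pot I) w = (2 * (if l = u then 1 else 0) * T) / T\<^sup>2"
    if "l \<in> I" "u \<in> I" for l u
    using fs_d2[OF fin that(2,1), of True w] that wr unfolding T_def by (simp add: pr_def)
  have "4 * Re (\<Sum>l\<in>I. \<Sum>u\<in>I. (complex_of_real a * cplx_hess (fs_pot I) w l u + cplx_hess f w l u)
              * complex_of_real (c l) * cnj (complex_of_real (c u)))
      = (\<Sum>l\<in>I. \<Sum>u\<in>I. (a * (iter_dpart [(l,False),(u,False)] (fs_pot I) w + iter_dpart [(l,True),(u,True)] (fs_pot I) w)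
             + iter_dpart [(l,False),(u,False)] f w + iter_dpart [(l,True),(u,True)] f w) * c l * c u)"
    apply (simp add: Re_sum sum_distrib_left ReH algebra_simps)
    apply (intro sum.cong refl)
    apply (simp add: field_simps)
    done
  also have "\<dots> = (\<Sum>l\<in>I. \<Sum>u\<in>I. (a * ((2 * (if l = u then 1 else 0) * T - 4 * r u * r l) / T\<^sup>2 + (2 * (if l = u then 1 else 0) * T) / T\<^sup>2)
             + iter_dpart [(l,False),(u,False)] f w + (if l = u then dpart l False f w / r l else 0)) * c l * c u)"
    by (intro sum.cong refl) (simp only: TTf FFs TTs)
  also have "\<dots> = (\<Sum>l\<in>I. \<Sum>u\<in>I. iter_dpart [(l,False),(u,False)] f w * c l * c u)
       + (\<Sum>l\<in>I. \<Sum>u\<in>I. (if l = u then dpart l False f w / r l else 0) * c l * c u)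
       + a * ((4 * T * (\<Sum>l\<in>I. \<Sum>u\<in>I. (if l = u then 1 else 0) * c l * c u)
               - 4 * (\<Sum>l\<in>I. \<Sum>u\<in>I. r u * r l * c l * c u)) / T\<^sup>2)"
  proof -
    have e: "(a * ((2 * (if l = u then 1 else 0) * T - 4 * r u * r l) / T\<^sup>2 + (2 * (if l = u then 1 else 0) * T) / T\<^sup>2)
             + X + Y) * c l * c u
          = X * c l * c u + Y * c l * c u + a * (4 * T * ((if l = u then 1 else 0) * c l * c u) - 4 * (r u * r l * c l * c u)) / T\<^sup>2"
      for l u and X Y :: real
      using Tpos by (simp add: field_simps)
    show ?thesis
      unfolding e sum.distrib sum_subtractf[symmetric] sum_divide_distrib[symmetric] sum_distrib_left[symmetric]
      by (simp add: sum_distrib_left sum_subtractf sum_divide_distrib algebra_simps)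
  qed
  also have "\<dots> = (\<Sum>l\<in>I. \<Sum>u\<in>I. iter_dpart [(l,False),(u,False)] f w * c l * c u)
       + (\<Sum>l\<in>I. dpart l False f w / r l * (c l)\<^sup>2)
       + a * (4 * T * (\<Sum>l\<in>I. (c l)\<^sup>2) - 4 * (\<Sum>l\<in>I. r l * c l)\<^sup>2) / T\<^sup>2"
    using sum_delta_sq[OF fin, of "\<lambda>l. dpart l False f w / r l" c] sum_delta_sq[OF fin, of "\<lambda>l. 1" c]
      sum_prod_sq[where r=r and c=c and I=I] by simp
  finally show ?thesis unfolding T_def .
qed

lemma curve_mono:
  fixes f :: "(nat \<Rightarrow> complex) \<Rightarrow> real" and L V :: "nat \<Rightarrow> real" and a :: real
  assumes fin: "finite I" and sm: "smooth_coords I f"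
    and tor: "\<And>u z \<zeta> \<zeta>'. u \<in> I \<Longrightarrow> cmod \<zeta> = cmod \<zeta>' \<Longrightarrow> f (z(u := \<zeta>)) = f (z(u := \<zeta>'))"
    and pd: "\<And>w. w \<in> coord_space I \<Longrightarrow>
       pos_def_herm I (\<lambda>l u. complex_of_real a * cplx_hess (fs_pot I) w l u + cplx_hess f w l u)"
    and G1: "(\<Sum>l\<in>I. dpart l False f (cur I (\<lambda>_. 0) (\<lambda>i s. exp (L i + s * V i)) 1) * (V l * exp (L l + 1 * V l)))
            + a * (\<Sum>l\<in>I. 2 * V l * (exp (L l + 1 * V l))\<^sup>2) / (1 + (\<Sum>l\<in>I. (exp (L l + 1 * V l))\<^sup>2)) \<le> 0"
  shows "f (cur I (\<lambda>_. 0) (\<lambda>i s. exp (L i + s * V i)) 1) + a * fs_pot I (cur I (\<lambda>_. 0) (\<lambda>i s. exp (L i + s * V i)) 1)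
       \<le> f (cur I (\<lambda>_. 0) (\<lambda>i s. exp (L i + s * V i)) 0) + a * fs_pot I (cur I (\<lambda>_. 0) (\<lambda>i s. exp (L i + s * V i)) 0)"
proof -
  define \<rho> where "\<rho> = (\<lambda>i s. exp (L i + s * V i))"
  define \<rho>' where "\<rho>' = (\<lambda>i s. V i * \<rho> i s)"
  define \<gamma> where "\<gamma> s = cur I (\<lambda>_. 0) \<rho> s" for s
  define T where "T s = 1 + (\<Sum>l\<in>I. (\<rho> l s)\<^sup>2)" for s
  define Tp where "Tp s = (\<Sum>l\<in>I. 2 * V l * (\<rho> l s)\<^sup>2)" for s
  define Tpp where "Tpp s = (\<Sum>l\<in>I. 4 * (V l)\<^sup>2 * (\<rho> l s)\<^sup>2)" for s
  define G where "G s = f (\<gamma> s) + a * fs_pot I (\<gamma> s)" for s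
  define G' where "G' s = (\<Sum>l\<in>I. dpart l False f (\<gamma> s) * \<rho>' l s) + a * (Tp s / T s)" for s
  define G'' where "G'' s = (\<Sum>u\<in>I. (\<Sum>l\<in>I. iter_dpart [(l,False),(u,False)] f (\<gamma> s) * \<rho>' l s) * \<rho>' u s
        + dpart u False f (\<gamma> s) * (V u * \<rho>' u s)) + a * ((Tpp s * T s - Tp s * Tp s) / (T s * T s))" for s
  have z0: "(\<lambda>_. 0) \<in> coord_space I" by (simp add: coord_space_def)
  have \<gamma>in: "\<gamma> s \<in> coord_space I" for s unfolding \<gamma>_def using cur_in[OF z0] by simp
  have \<gamma>l: "\<gamma> s l = complex_of_real (\<rho> l s)" if "l \<in> I" for s l using that by (simp add: \<gamma>_def cur_def)
  have \<rho>pos: "\<rho> l s > 0" for l s by (simp add: \<rho>_def)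
  have Tpos: "T s > 0" for s unfolding T_def by (simp add: add_pos_nonneg sum_nonneg)
  have SqT: "1 + Sq I (\<gamma> s) = T s" for s
    unfolding Sq_def T_def by (simp add: \<gamma>l abs_of_pos[OF \<rho>pos])
  have hR: "(\<rho> l has_real_derivative \<rho>' l s) (at s)" for l s
    unfolding \<rho>_def \<rho>'_def by (auto intro!: derivative_eq_intros)
  have hRC: "continuous_on UNIV (\<rho>' l)" for l
    unfolding \<rho>_def \<rho>'_def by (intro continuous_intros)
  have hR2: "((\<lambda>s. (\<rho> l s)\<^sup>2) has_real_derivative 2 * V l * (\<rho> l s)\<^sup>2) (at s)" for l s
    unfolding \<rho>_def by (auto intro!: derivative_eq_intros simp: power2_eq_square)
  have hR2': "((\<lambda>s. 2 * V l * (\<rho> l s)\<^sup>2) has_real_derivative 4 * (V l)\<^sup>2 * (\<rho> l s)\<^sup>2) (at s)" for l s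
    unfolding \<rho>_def by (auto intro!: derivative_eq_intros simp: power2_eq_square)
  have hT: "(T has_real_derivative Tp s) (at s)" for s
    unfolding T_def Tp_def using DERIV_add[OF DERIV_const[of 1] DERIV_sum[of I "\<lambda>s l. (\<rho> l s)\<^sup>2", OF hR2]] by simp
  have hTp: "(Tp has_real_derivative Tpp s) (at s)" for s
    unfolding Tpp_def Tp_def using DERIV_sum[of I "\<lambda>s l. 2 * V l * (\<rho> l s)\<^sup>2", OF hR2'] by simp
  have Df: "((\<lambda>s. g (\<gamma> s)) has_real_derivative (\<Sum>l\<in>I. dpart l False g (\<gamma> s) * \<rho>' l s)) (at s)"
    if gs: "\<And>l. l \<in> I \<Longrightarrow> smooth_coords I f \<and> set (map fst ds) \<subseteq> I" and gds: "g = iter_dpart ds f" for g ds s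
  proof -
    have "((\<lambda>s. g (cur I (\<lambda>_. 0) \<rho> s)) has_real_derivative (\<Sum>l\<in>I. dpart l False g (cur I (\<lambda>_. 0) \<rho> s) * \<rho>' l s)) (at s)"
    proof (rule chain_curve[OF fin order_refl _ _ hR hRC z0])
      fix l p assume l: "l \<in> I" and p: "p \<in> coord_space I"
      show "((\<lambda>t. g (p(l := p l + complex_of_real t))) has_real_derivative dpart l False g p) (at 0)"
        using smooth_D[OF sm _ l p, of ds False] gs[OF l] unfolding gds dir_line_re by simp
    next
      fix l assume l: "l \<in> I"
      show "continuous_on (coord_space I) (dpart l False g)"
        using smooth_C[OF sm, of "(l,False) # ds"] gs[OF l] l unfolding gds by simp
    qed
    then show ?thesis unfolding \<gamma>_def .
  qed
  have fsg: "fs_pot I (\<gamma> s) = ln (T s)" for s unfolding fs_pot_def SqT[symmetric] Sq_def ..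
  have hG: "(G has_real_derivative G' s) (at s)" for s
  proof -
    have lt: "((\<lambda>s. ln (T s)) has_real_derivative Tp s / T s) (at s)"
      using DERIV_chain2[OF DERIV_ln_divide[OF Tpos[of s]] hT] by simp
    have df: "((\<lambda>s. f (\<gamma> s)) has_real_derivative (\<Sum>l\<in>I. dpart l False f (\<gamma> s) * \<rho>' l s)) (at s)"
      using Df[of "[]" f s] sm by simp
    show ?thesis
      unfolding G_def G'_def fsg using DERIV_add[OF df DERIV_cmult[OF lt, of a]] by simp
  qed
  have hG': "(G' has_real_derivative G'' s) (at s)" for s
  proof -
    have q1: "((\<lambda>s. Tp s / T s) has_real_derivative (Tpp s * T s - Tp s * Tp s) / (T s * T s)) (at s)"
      using DERIV_divide[OF hTp hT] Tpos[of s] by simp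
    have hh: "((\<lambda>s. dpart u False f (\<gamma> s) * \<rho>' u s) has_real_derivative
        (\<Sum>l\<in>I. iter_dpart [(l,False),(u,False)] f (\<gamma> s) * \<rho>' l s) * \<rho>' u s
        + dpart u False f (\<gamma> s) * (V u * \<rho>' u s)) (at s)" if u: "u \<in> I" for u
    proof -
      have d1: "((\<lambda>s. dpart u False f (\<gamma> s)) has_real_derivative
          (\<Sum>l\<in>I. iter_dpart [(l,False),(u,False)] f (\<gamma> s) * \<rho>' l s)) (at s)"
        using Df[of "[(u,False)]" "dpart u False f" s] u sm by simp
      have d2: "(\<rho>' u has_real_derivative V u * \<rho>' u s) (at s)"
        using DERIV_cmult[OF hR[of u s], of "V u"] unfolding \<rho>'_def by simp
      show ?thesis using DERIV_mult[OF d1 d2] by (simp add: algebra_simps)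
    qed
    show ?thesis unfolding G'_def G''_def
      using DERIV_add[OF DERIV_sum[of I "\<lambda>s u. dpart u False f (\<gamma> s) * \<rho>' u s", OF hh] DERIV_cmult[OF q1, of a]]
      by simp
  qed
  have G''nn: "G'' s \<ge> 0" for s
  proof -
    define c where "c l = \<rho>' l s" for l
    define v where "v l = complex_of_real (c l)" for l
    let ?M = "\<lambda>l u. complex_of_real a * cplx_hess (fs_pot I) (\<gamma> s) l u + cplx_hess f (\<gamma> s) l u"
    have fi: "4 * Re (\<Sum>l\<in>I. \<Sum>u\<in>I. ?M l u * complex_of_real (c l) * cnj (complex_of_real (c u)))
     = (\<Sum>l\<in>I. \<Sum>u\<in>I. iter_dpart [(l,False),(u,False)] f (\<gamma> s) * c l * c u)
       + (\<Sum>l\<in>I. dpart l False f (\<gamma> s) / \<rho> l s * (c l)\<^sup>2)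
       + a * (4 * (1 + Sq I (\<gamma> s)) * (\<Sum>l\<in>I. (c l)\<^sup>2) - 4 * (\<Sum>l\<in>I. \<rho> l s * c l)\<^sup>2) / (1 + Sq I (\<gamma> s))\<^sup>2"
      by (rule form_identity[OF fin sm tor \<gamma>in \<gamma>l \<rho>pos])
    have "G'' s = 4 * Re (\<Sum>l\<in>I. \<Sum>u\<in>I. ?M l u * complex_of_real (c l) * cnj (complex_of_real (c u)))"
    proof -
      have A: "(\<Sum>u\<in>I. (\<Sum>l\<in>I. iter_dpart [(l,False),(u,False)] f (\<gamma> s) * \<rho>' l s) * \<rho>' u s)
          = (\<Sum>l\<in>I. \<Sum>u\<in>I. iter_dpart [(l,False),(u,False)] f (\<gamma> s) * c l * c u)"
        unfolding c_def sum_distrib_right by (subst sum.swap) simp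
      have B: "(\<Sum>u\<in>I. dpart u False f (\<gamma> s) * (V u * \<rho>' u s)) = (\<Sum>l\<in>I. dpart l False f (\<gamma> s) / \<rho> l s * (c l)\<^sup>2)"
        unfolding c_def \<rho>'_def using \<rho>pos by (intro sum.cong refl) (simp add: field_simps power2_eq_square)
      have C1: "Tpp s = 4 * (\<Sum>l\<in>I. (c l)\<^sup>2)"
        unfolding Tpp_def c_def \<rho>'_def by (simp add: sum_distrib_left power_mult_distrib algebra_simps)
      have C2: "Tp s = 2 * (\<Sum>l\<in>I. \<rho> l s * c l)"
        unfolding Tp_def c_def \<rho>'_def by (simp add: sum_distrib_left power2_eq_square algebra_simps)
      have C: "(Tpp s * T s - Tp s * Tp s) / (T s * T s) = (4 * T s * (\<Sum>l\<in>I. (c l)\<^sup>2) - 4 * (\<Sum>l\<in>I. \<rho> l s * c l)\<^sup>2) / (T s)\<^sup>2"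
        unfolding C1 C2 by (simp add: power2_eq_square algebra_simps)
      show ?thesis unfolding G''_def sum.distrib A B C fi SqT by (simp only: times_divide_eq_right)
    qed
    moreover have "Re (\<Sum>l\<in>I. \<Sum>u\<in>I. ?M l u * complex_of_real (c l) * cnj (complex_of_real (c u))) \<ge> 0"
    proof (cases "\<exists>i\<in>I. v i \<noteq> 0")
      case True
      have H: "\<forall>v. (\<exists>i\<in>I. v i \<noteq> 0) \<longrightarrow> 0 < Re (\<Sum>l\<in>I. \<Sum>u\<in>I. ?M l u * v l * cnj (v u))"
        using pd[OF \<gamma>in] unfolding pos_def_herm_def by blast
      have "0 < Re (\<Sum>l\<in>I. \<Sum>u\<in>I. ?M l u * v l * cnj (v u))"
        using H True by blast
      then show ?thesis unfolding v_def by simp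
    next
      case False
      then have "c i = 0" if "i \<in> I" for i using that by (auto simp: v_def)
      then show ?thesis by simp
    qed
    ultimately show ?thesis by simp
  qed
  have G'mono: "G' s \<le> G' 1" if "s \<le> 1" for s
    using DERIV_nonneg_imp_nondecreasing[OF that, of G'] hG' G''nn by blast
  have G'1: "G' 1 \<le> 0"
  proof -
    have "G' 1 = (\<Sum>l\<in>I. dpart l False f (cur I (\<lambda>_. 0) (\<lambda>i s. exp (L i + s * V i)) 1) * (V l * exp (L l + 1 * V l)))
            + a * (\<Sum>l\<in>I. 2 * V l * (exp (L l + 1 * V l))\<^sup>2) / (1 + (\<Sum>l\<in>I. (exp (L l + 1 * V l))\<^sup>2))"
      unfolding G'_def \<rho>'_def \<rho>_def T_def Tp_def \<gamma>_def by (simp only: times_divide_eq_right)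
    then show ?thesis using G1 by simp
  qed
  have "G 1 \<le> G 0"
    using DERIV_nonpos_imp_nonincreasing[of 0 1 G] hG G'mono G'1 by (meson order_trans zero_le_one)
  then show ?thesis unfolding G_def \<gamma>_def \<rho>_def .
qed

lemma block_sum:
  fixes C g :: "nat \<Rightarrow> real" and blk :: "nat \<Rightarrow> nat"
  assumes fin: "finite I" and cst: "\<And>l l'. l \<in> I \<Longrightarrow> l' \<in> I \<Longrightarrow> blk l = blk l' \<Longrightarrow> C l = C l'"
  shows "(\<Sum>l\<in>I. C l * ((\<Sum>i\<in>{i\<in>I. blk i = blk l}. g i) / card {i\<in>I. blk i = blk l})) = (\<Sum>i\<in>I. C i * g i)"
proof -
  define B where "B l = {i\<in>I. blk i = blk l}" for l
  have finB: "finite (B l)" for l using fin by (simp add: B_def)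
  have cardB: "card (B i) > 0" if "i \<in> I" for i
    using that finB[of i] by (auto simp: B_def card_gt_0_iff)
  have s1: "C l * ((\<Sum>i\<in>B l. g i) / card (B l)) = (\<Sum>i\<in>I. (if blk i = blk l then C l * g i / card (B l) else 0))" for l
  proof -
    have "C l * ((\<Sum>i\<in>B l. g i) / card (B l)) = (\<Sum>i\<in>B l. C l * g i / card (B l))"
      by (simp add: sum_distrib_left sum_divide_distrib)
    also have "\<dots> = (\<Sum>i\<in>I. (if blk i = blk l then C l * g i / card (B l) else 0))"
      unfolding B_def by (rule sum.inter_filter[OF fin])
    finally show ?thesis .
  qed
  have s2: "(\<Sum>l\<in>I. (if blk i = blk l then C l * g i / card (B l) else 0)) = C i * g i" if i: "i \<in> I" for i
  proof -
    have "(\<Sum>l\<in>I. (if blk i = blk l then C l * g i / card (B l) else 0))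
        = (\<Sum>l\<in>I. (if blk l = blk i then C i * g i / card (B i) else 0))"
    proof (rule sum.cong[OF refl])
      fix l assume l: "l \<in> I"
      show "(if blk i = blk l then C l * g i / card (B l) else 0) = (if blk l = blk i then C i * g i / card (B i) else 0)"
      proof (cases "blk i = blk l")
        case True
        then have "C l = C i" using cst[OF l i] by simp
        moreover have "B l = B i" using True unfolding B_def by simp
        ultimately show ?thesis using True by simp
      next
        case False
        then show ?thesis by simp
      qed
    qed
    also have "\<dots> = (\<Sum>l\<in>B i. C i * g i / card (B i))"
      unfolding B_def by (rule sum.inter_filter[OF fin, symmetric])
    also have "\<dots> = C i * g i" using cardB[OF i] by simp
    finally show ?thesis .
  qed
  have "(\<Sum>l\<in>I. C l * ((\<Sum>i\<in>B l. g i) / card (B l)))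
      = (\<Sum>l\<in>I. \<Sum>i\<in>I. (if blk i = blk l then C l * g i / card (B l) else 0))"
    by (simp only: s1)
  also have "\<dots> = (\<Sum>i\<in>I. \<Sum>l\<in>I. (if blk i = blk l then C l * g i / card (B l) else 0))"
    by (rule sum.swap)
  also have "\<dots> = (\<Sum>i\<in>I. C i * g i)"
    by (rule sum.cong[OF refl]) (rule s2)
  finally show ?thesis unfolding B_def .
qed

lemma div_block_0:
  fixes n m :: nat
  assumes "n \<ge> 2" "m \<ge> n - 1"
  shows "{i\<in>{1..m}. i div n = 0} = {1..n-1}"
proof (intro set_eqI iffI)
  fix i assume "i \<in> {i\<in>{1..m}. i div n = 0}"
  then have "1 \<le> i" "i < n" using assms by (auto simp: div_eq_0_iff)
  then show "i \<in> {1..n-1}" by simp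
next
  fix i assume "i \<in> {1..n-1}"
  then have "1 \<le> i" "i < n" "i \<le> m" using assms by auto
  then show "i \<in> {i\<in>{1..m}. i div n = 0}" by simp
qed

lemma div_iff_nat:
  fixes i n h :: nat
  assumes "n > 0"
  shows "i div n = h \<longleftrightarrow> n * h \<le> i \<and> i < n * Suc h"
proof
  assume h: "i div n = h"
  have m1: "n * (i div n) + i mod n = i" by (rule mult_div_mod_eq)
  have m2: "i mod n < n" using assms by simp
  have "n * Suc (i div n) = n * (i div n) + n" by simp
  then show "n * h \<le> i \<and> i < n * Suc h" using m1 m2 unfolding h by linarith
next
  assume "n * h \<le> i \<and> i < n * Suc h"
  then show "i div n = h" by (intro div_nat_eqI) auto
qed

lemma div_block_h:
  fixes n m h k :: nat
  assumes "n \<ge> 2" "1 \<le> h" "h < k" "m = k * n - 1"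
  shows "{i\<in>{1..m}. i div n = h} = {h*n..(h+1)*n-1}"
proof -
  have le: "h*n + n \<le> k*n" using assms by (metis Suc_eq_plus1 Suc_leI add.commute mult_Suc mult_le_mono1)
  have hn: "n \<le> h * n" using assms by simp
  have np: "n > 0" using assms by simp
  have e1: "(h+1)*n = h*n + n" by simp
  have e2: "n * Suc h = h*n + n" by simp
  have e3: "n * h = h * n" by simp
  show ?thesis
  proof (intro set_eqI iffI)
    fix i assume "i \<in> {i\<in>{1..m}. i div n = h}"
    then have "h * n \<le> i" "i < h * n + n" using div_iff_nat[OF np, of i h] unfolding e2 e3 by auto
    then show "i \<in> {h*n..(h+1)*n-1}" unfolding e1 by simp
  next
    fix i assume i: "i \<in> {h*n..(h+1)*n-1}"
    then have a1: "h * n \<le> i" "i < h * n + n" using np unfolding e1 by auto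
    moreover have "1 \<le> i" "i \<le> m" using a1 hn le assms(4) np by linarith+
    ultimately show "i \<in> {i\<in>{1..m}. i div n = h}" using div_iff_nat[OF np, of i h] unfolding e2 e3 by auto
  qed
qed

lemma psi_eval:
  fixes Z :: "nat \<Rightarrow> complex" and y :: "nat \<Rightarrow> real" and m :: nat
  assumes Z0: "Z 0 = 1" and Zy: "\<And>i. i \<in> {1..m} \<Longrightarrow> Z i = complex_of_real (y i)"
    and ypos: "\<And>i. i \<in> {1..m} \<Longrightarrow> y i > 0"
  shows "psi a m Z = 2 * a / real (m + 1) * (\<Sum>i\<in>{1..m}. ln (y i)) - a * ln (1 + (\<Sum>i\<in>{1..m}. (y i)\<^sup>2))"
proof -
  have at: "{..m} = insert 0 {1..m}" by auto
  have pr1: "(\<Prod>i\<in>{1..m}. cmod (Z i)) = (\<Prod>i\<in>{1..m}. y i)"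
  proof (rule prod.cong[OF refl])
    fix i assume i: "i \<in> {1..m}"
    show "cmod (Z i) = y i" using Zy[OF i] ypos[OF i] by simp
  qed
  have sm1: "(\<Sum>i\<in>{1..m}. (cmod (Z i))\<^sup>2) = (\<Sum>i\<in>{1..m}. (y i)\<^sup>2)"
  proof (rule sum.cong[OF refl])
    fix i assume i: "i \<in> {1..m}"
    show "(cmod (Z i))\<^sup>2 = (y i)\<^sup>2" using Zy[OF i] ypos[OF i] by simp
  qed
  have pr: "(\<Prod>p\<le>m. cmod (Z p)) = (\<Prod>i\<in>{1..m}. y i)"
    unfolding at prod.insert[OF finite_atLeastAtMost, of 0 1 m, simplified] using Z0 pr1 by simp
  have sm: "(\<Sum>p\<le>m. (cmod (Z p))\<^sup>2) = 1 + (\<Sum>i\<in>{1..m}. (y i)\<^sup>2)"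
    unfolding at sum.insert[OF finite_atLeastAtMost, of 0 1 m, simplified] using Z0 sm1 by simp
  have ppos: "(\<Prod>i\<in>{1..m}. y i) > 0" by (rule prod_pos) (rule ypos)
  have spos: "1 + (\<Sum>i\<in>{1..m}. (y i)\<^sup>2) > 0" by (simp add: add_pos_nonneg sum_nonneg)
  have "psi a m Z = ln ((\<Prod>i\<in>{1..m}. y i) powr (2 * a / real (m + 1)) / (1 + (\<Sum>i\<in>{1..m}. (y i)\<^sup>2)) powr a)"
    unfolding psi_def pr sm ..
  also have "\<dots> = 2 * a / real (m + 1) * ln (\<Prod>i\<in>{1..m}. y i) - a * ln (1 + (\<Sum>i\<in>{1..m}. (y i)\<^sup>2))"
  proof -
    have ld: "ln (X / Y) = ln X - ln Y" if "X \<noteq> 0" "Y \<noteq> 0" for X Y :: real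
      using that by (simp add: ln_div)
    have n1: "(\<Prod>i\<in>{1..m}. y i) powr (2 * a / real (m + 1)) \<noteq> 0" using ppos by (metis powr_gt_zero less_irrefl)
    have n2: "(1 + (\<Sum>i\<in>{1..m}. (y i)\<^sup>2)) powr a \<noteq> 0" using spos by (metis powr_gt_zero less_irrefl)
    show ?thesis unfolding ld[OF n1 n2] ln_powr ..
  qed
  also have "ln (\<Prod>i\<in>{1..m}. y i) = (\<Sum>i\<in>{1..m}. ln (y i))"
    by (intro ln_prod) (use ypos in force)+
  finally show ?thesis .
qed

theorem lemma1:
  fixes k n m :: nat and a :: real and \<phi> :: "(nat \<Rightarrow> complex) \<Rightarrow> real" and x :: "nat \<Rightarrow> real"
  assumes "k \<ge> 1" and "n \<ge> 2" and "m = k * n - 1" and "a > 0"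
    and "proj_fun m \<phi>" and "smooth_Pm m \<phi>" and "g_admissible a m \<phi>" and "G_invariant n k \<phi>"
    and "\<forall>i\<in>{1..m}. 0 < x i \<and> x i \<le> 1"
  shows "(let \<zeta>0 = (\<Prod>i\<in>{1..n-1}. x i) powr (1 / real (n - 1));
              \<zeta> = (\<lambda>h. (\<Prod>i\<in>{h*n..(h+1)*n-1}. x i) powr (1 / real n));
              P = (\<lambda>i. if i = 0 then 1 else complex_of_real (x i));
              Q = (\<lambda>i. if i = 0 then 1 else if i < n then complex_of_real \<zeta>0
                       else complex_of_real (\<zeta> (i div n)))
          in \<phi> P - psi a m P \<ge> \<phi> Q - psi a m Q)"
proof -
  note k = assms(1) and n2 = assms(2) and mdef = assms(3) and apos = assms(4)
  note pj = assms(5) and smP = assms(6) and gad = assms(7) and Ginv = assms(8)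
  have np: "n > 0" using n2 by simp
  have kn: "k * n \<ge> 2" using k n2 by (metis mult_1 mult_le_mono1 order_trans)
  have mlt: "m < k * n" using mdef kn by simp
  have mge: "m \<ge> n - 1" using mdef k np by (metis diff_le_mono mult_1 mult_le_mono1)
  define I where "I = {1..m}"
  have finI: "finite I" by (simp add: I_def)
  have xpos: "x i > 0" if "i \<in> I" for i using assms(9) that by (simp add: I_def)
  have cidx: "chart_idx m 0 = I" unfolding chart_idx_def I_def by auto
  define f where "f = (\<lambda>w. \<phi> (chart m 0 w))"
  have sm: "smooth_coords I f"
    using smP unfolding smooth_Pm_def cidx[symmetric] f_def by blast
  have pd: "pos_def_herm I (\<lambda>l u. complex_of_real a * cplx_hess (fs_pot I) w l u + cplx_hess f w l u)"
    if "w \<in> coord_space I" for w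
    using gad that unfolding g_admissible_def cidx[symmetric] f_def by blast
  have chart_upd: "chart m 0 (z(u := c)) = (chart m 0 z)(u := c)" if "u \<in> I" for z u c
    using that by (auto simp: chart_def I_def fun_eq_iff)
  have tor: "f (z(u := \<zeta>)) = f (z(u := \<zeta>'))" if u: "u \<in> I" and cm: "cmod \<zeta> = cmod \<zeta>'" for u z \<zeta> \<zeta>'
  proof -
    obtain \<theta> where th: "\<zeta> = cis \<theta> * \<zeta>'" using cis_exists[of \<zeta>' \<zeta>] cm by auto
    have ul: "u < k * n" using u mlt by (simp add: I_def)
    have "\<phi> (((chart m 0 z)(u := \<zeta>'))(u := cis \<theta> * ((chart m 0 z)(u := \<zeta>')) u)) = \<phi> ((chart m 0 z)(u := \<zeta>'))"
      using Ginv ul unfolding G_invariant_def by blast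
    then show ?thesis unfolding f_def chart_upd[OF u] th by simp
  qed
  define z0 where "z0 = (\<Prod>i\<in>{1..n-1}. x i) powr (1 / real (n - 1))"
  define zz where "zz h = (\<Prod>i\<in>{h*n..(h+1)*n-1}. x i) powr (1 / real n)" for h
  define xb where "xb i = (if i < n then z0 else zz (i div n))" for i
  define B where "B l = {i\<in>I. i div n = l div n}" for l
  have BI: "B l \<subseteq> I" for l by (auto simp: B_def)
  have xb_eq: "xb l = (\<Prod>i\<in>B l. x i) powr (1 / real (card (B l)))" if l: "l \<in> I" for l
  proof (cases "l < n")
    case True
    then have "l div n = 0" by simp
    then have "B l = {1..n-1}" unfolding B_def I_def using div_block_0[OF n2 mge] by simp
    then show ?thesis using True by (simp add: xb_def z0_def)
  next
    case False
    define h where "h = l div n"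
    have h1: "1 \<le> h" using False np div_le_mono[of n l n] by (simp add: h_def)
    have hk: "h < k" using l mlt unfolding h_def I_def by (simp add: less_mult_imp_div_less)
    have "B l = {h*n..(h+1)*n-1}" unfolding B_def I_def h_def[symmetric] using div_block_h[OF n2 h1 hk mdef] by simp
    moreover have "card {h*n..(h+1)*n-1} = n" using np by (simp add: algebra_simps)
    ultimately show ?thesis using False by (simp add: xb_def zz_def h_def)
  qed
  have prodpos: "(\<Prod>i\<in>B l. x i) > 0" for l
    by (rule prod_pos) (use BI xpos in blast)
  have xbpos: "xb l > 0" if "l \<in> I" for l
    unfolding xb_eq[OF that] using prodpos[of l] by simp
  have lnxb: "ln (xb l) = (\<Sum>i\<in>B l. ln (x i)) / real (card (B l))" if "l \<in> I" for l
  proof -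
    have "ln (\<Prod>i\<in>B l. x i) = (\<Sum>i\<in>B l. ln (x i))"
    proof (rule ln_prod)
      show "finite (B l)" using BI finI by (rule finite_subset)
      show "x i \<noteq> 0" if "i \<in> B l" for i using xpos[of i] BI that by force
    qed
    then show ?thesis unfolding xb_eq[OF that] by simp
  qed
  have blk: "(\<Sum>l\<in>I. C l * ln (xb l)) = (\<Sum>l\<in>I. C l * ln (x l))"
    if cst: "\<And>l l'. l \<in> I \<Longrightarrow> l' \<in> I \<Longrightarrow> l div n = l' div n \<Longrightarrow> C l = C l'" for C
  proof -
    have "(\<Sum>l\<in>I. C l * ln (xb l)) = (\<Sum>l\<in>I. C l * ((\<Sum>i\<in>{i\<in>I. i div n = l div n}. ln (x i)) / card {i\<in>I. i div n = l div n}))"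
      by (intro sum.cong refl) (simp add: lnxb B_def)
    also have "\<dots> = (\<Sum>l\<in>I. C l * ln (x l))"
      by (rule block_sum[OF finI cst])
    finally show ?thesis .
  qed
  have xb_cst: "xb l = xb l'" if "l \<in> I" "l' \<in> I" "l div n = l' div n" for l l'
  proof -
    have "l < n \<longleftrightarrow> l div n = 0" "l' < n \<longleftrightarrow> l' div n = 0" using np by (auto simp: div_eq_0_iff)
    then show ?thesis using that by (simp add: xb_def)
  qed
  define L where "L i = ln (x i)" for i
  define V where "V i = ln (xb i) - ln (x i)" for i
  define W where "W = cur I (\<lambda>_. 0) (\<lambda>i s. exp (L i + s * V i)) 1"
  define W0 where "W0 = cur I (\<lambda>_. 0) (\<lambda>i s. exp (L i + s * V i)) 0"
  have e1: "exp (L l + 1 * V l) = xb l" if "l \<in> I" for l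
    using xbpos[OF that] xpos[OF that] by (simp add: L_def V_def)
  have e1': "exp (L l + V l) = xb l" if "l \<in> I" for l using e1[OF that] by simp
  have e0: "exp (L l + 0 * V l) = x l" if "l \<in> I" for l
    using xpos[OF that] by (simp add: L_def)
  have W1: "W l = complex_of_real (xb l)" if "l \<in> I" for l
    using that e1 by (simp add: W_def cur_def)
  have W00: "W0 l = complex_of_real (x l)" if "l \<in> I" for l
    using that e0 by (simp add: W0_def cur_def)
  have Dconst: "dpart l False f W = dpart l' False f W"
    if l: "l \<in> I" and l': "l' \<in> I" and b: "l div n = l' div n" for l l'
  proof -
    have Wl: "W l = W l'" using W1[OF l] W1[OF l'] xb_cst[OF l l' b] by simp
    have lk: "l < k * n" "l' < k * n" using l l' mlt by (auto simp: I_def)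
    have sw: "\<phi> (z \<circ> Fun.swap l l' id) = \<phi> z" for z
      using Ginv lk b unfolding G_invariant_def by blast
    have "f (dir_line l False W t) = f (dir_line l' False W t)" for t
    proof -
      have "chart m 0 (dir_line l' False W t) \<circ> Fun.swap l l' id = chart m 0 (dir_line l False W t)"
        using l l' Wl by (auto simp: fun_eq_iff chart_def dir_line_def Transposition.transpose_def I_def)
      then show ?thesis using sw[of "chart m 0 (dir_line l' False W t)"] unfolding f_def by simp
    qed
    then show ?thesis unfolding dpart_def by simp
  qed
  define T1 where "T1 = 1 + (\<Sum>l\<in>I. (xb l)\<^sup>2)"
  define C where "C l = dpart l False f W * xb l + a * 2 * (xb l)\<^sup>2 / T1" for l
  have Ccst: "C l = C l'" if "l \<in> I" "l' \<in> I" "l div n = l' div n" for l l'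
    unfolding C_def using Dconst[OF that] xb_cst[OF that] by simp
  have G1: "(\<Sum>l\<in>I. dpart l False f (cur I (\<lambda>_. 0) (\<lambda>i s. exp (L i + s * V i)) 1) * (V l * exp (L l + 1 * V l)))
            + a * (\<Sum>l\<in>I. 2 * V l * (exp (L l + 1 * V l))\<^sup>2) / (1 + (\<Sum>l\<in>I. (exp (L l + 1 * V l))\<^sup>2)) \<le> 0"
  proof -
    have s1: "(\<Sum>l\<in>I. dpart l False f W * (V l * exp (L l + 1 * V l))) = (\<Sum>l\<in>I. dpart l False f W * xb l * V l)"
      by (intro sum.cong refl) (simp add: e1')
    have s2: "(\<Sum>l\<in>I. 2 * V l * (exp (L l + 1 * V l))\<^sup>2) = (\<Sum>l\<in>I. 2 * V l * (xb l)\<^sup>2)"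
      by (intro sum.cong refl) (simp add: e1')
    have s3: "(\<Sum>l\<in>I. (exp (L l + 1 * V l))\<^sup>2) = (\<Sum>l\<in>I. (xb l)\<^sup>2)"
      by (intro sum.cong refl) (simp add: e1')
    have "(\<Sum>l\<in>I. dpart l False f W * xb l * V l) + a * (\<Sum>l\<in>I. 2 * V l * (xb l)\<^sup>2) / T1
        = (\<Sum>l\<in>I. C l * V l)"
      unfolding C_def by (simp add: sum.distrib sum_distrib_left sum_divide_distrib algebra_simps)
    also have "\<dots> = (\<Sum>l\<in>I. C l * ln (xb l)) - (\<Sum>l\<in>I. C l * ln (x l))"
      unfolding V_def by (simp add: sum_subtractf algebra_simps)
    also have "\<dots> = 0"
    proof -
      have bb: "(\<Sum>l\<in>I. C l * ln (xb l)) = (\<Sum>l\<in>I. C l * ln (x l))"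
        by (rule blk) (rule Ccst)
      show ?thesis unfolding bb by (rule diff_self)
    qed
    finally show ?thesis unfolding W_def[symmetric] s1 s2 s3 T1_def by simp
  qed
  have main: "f W + a * fs_pot I W \<le> f W0 + a * fs_pot I W0"
    using curve_mono[OF finI sm tor pd G1] unfolding W_def W0_def by blast
  define P where "P = (\<lambda>i. if i = 0 then 1 else complex_of_real (x i))"
  define Q where "Q = (\<lambda>i. if i = 0 then 1 else if i < n then complex_of_real z0 else complex_of_real (zz (i div n)))"
  have PI: "P i = complex_of_real (x i)" if "i \<in> I" for i using that by (simp add: P_def I_def)
  have QI: "Q i = complex_of_real (xb i)" if "i \<in> I" for i using that by (simp add: Q_def xb_def I_def)
  have chart0: "chart m 0 w 0 = 1" for w by (simp add: chart_def)
  have chartI: "chart m 0 w i = w i" if "i \<in> I" for w i using that by (simp add: chart_def I_def)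
  have pj1: "\<phi> z = \<phi> z'" if "\<And>i. i \<le> m \<Longrightarrow> z i = z' i" for z z'
    using pj that unfolding proj_fun_def by blast
  have phiP: "\<phi> P = f W0" unfolding f_def
  proof (rule pj1)
    fix i assume i: "i \<le> m"
    show "P i = chart m 0 W0 i"
    proof (cases "i = 0")
      case True then show ?thesis by (simp add: P_def chart0)
    next
      case False then have "i \<in> I" using i by (simp add: I_def)
      then show ?thesis using PI W00 chartI by simp
    qed
  qed
  have phiQ: "\<phi> Q = f W" unfolding f_def
  proof (rule pj1)
    fix i assume i: "i \<le> m"
    show "Q i = chart m 0 W i"
    proof (cases "i = 0")
      case True then show ?thesis by (simp add: Q_def chart0)
    next
      case False then have "i \<in> I" using i by (simp add: I_def)
      then show ?thesis using QI W1 chartI by simp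
    qed
  qed
  have fsW0: "fs_pot I W0 = ln (1 + (\<Sum>i\<in>I. (x i)\<^sup>2))"
    unfolding fs_pot_def by (intro arg_cong[where f=ln] arg_cong[where f="\<lambda>t. 1 + t"] sum.cong refl) (simp add: W00)
  have fsW: "fs_pot I W = ln (1 + (\<Sum>i\<in>I. (xb i)\<^sup>2))"
    unfolding fs_pot_def by (intro arg_cong[where f=ln] arg_cong[where f="\<lambda>t. 1 + t"] sum.cong refl) (simp add: W1)
  have psiP: "psi a m P = 2 * a / real (m + 1) * (\<Sum>i\<in>I. ln (x i)) - a * ln (1 + (\<Sum>i\<in>I. (x i)\<^sup>2))"
    unfolding I_def
  proof (rule psi_eval)
    show "P 0 = 1" by (simp add: P_def)
    show "P i = complex_of_real (x i)" if "i \<in> {1..m}" for i using PI that unfolding I_def by blast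
    show "x i > 0" if "i \<in> {1..m}" for i using xpos that unfolding I_def by blast
  qed
  have psiQ: "psi a m Q = 2 * a / real (m + 1) * (\<Sum>i\<in>I. ln (xb i)) - a * ln (1 + (\<Sum>i\<in>I. (xb i)\<^sup>2))"
    unfolding I_def
  proof (rule psi_eval)
    show "Q 0 = 1" by (simp add: Q_def)
    show "Q i = complex_of_real (xb i)" if "i \<in> {1..m}" for i using QI that unfolding I_def by blast
    show "xb i > 0" if "i \<in> {1..m}" for i using xbpos that unfolding I_def by blast
  qed
  have lnsum: "(\<Sum>i\<in>I. ln (xb i)) = (\<Sum>i\<in>I. ln (x i))"
    using blk[of "\<lambda>_. 1"] by simp
  have final: "\<phi> P - psi a m P \<ge> \<phi> Q - psi a m Q"
    unfolding phiP phiQ psiP psiQ lnsum using main unfolding fsW fsW0 by simp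
  show ?thesis
    using final unfolding Let_def P_def Q_def z0_def zz_def .
qed

end
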